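(* Let $u$ and $v$ be vertices of $G$ and let $P(u,v)=(u=x_1,\dots,x_p=v)$ be the path from $u$ to $v$ in $T$. Suppose the routing steps of a single case of the routing algorithm are executed (when routing from $u$ to $v$) and vertices $w_1$ and $w_2$ are visited. Then there are indices $1\le i_1\le i_2\le p$ such that $w_1=x_{i_1}$ and $w_2=x_{i_2}$.
   Context: Let $T$ be a rooted tree on $n$ vertices with positive edge weights; $P(a,b)$ is the path in $T$ from $a$ to $b$ and $\delta_T(a,b)$ its weight. Ancestor/descendant refer to $T$, and a vertex counts as its own ancestor and descendant; "deepest"/"highest" refer to depth in $T$. $T_v$ is the subtree of $T$ rooted at $v$. For every non-leaf vertex $v$ fix a child $c_1(v)$ with $|T_{c_1(v)}|$ maximal; edges $(v,c_1(v))$ are leftmost. A subtree $R$ of $T$ is rooted at its vertex closest to the root, $rt(R)$, and inherits the leftmost labelling; $R_v$ is the subtree of $R$ rooted at $v$. $P_R(v)$ is the longest downward path from $v$ in $R$ using only leftmost edges, with last vertex $l(v)$; $l(R):=l(rt(R))$. A vertex $v$ of $R$ is $d$-balanced if $|R_{c_1(v)}|\le |R|-d$ (with $|R_{c_1(v)}|=0$ if $c_1(v)$ is undefined or not in $R$); $b_d(v)$ is the first $d$-balanced vertex on $P_R(v)$, or NULL. $CV(R,d)=\emptyset$ if $b_d(rt(R))$ is NULL, else $\{b\}\cup\bigcup_w CV(R_w,d)$ with $b=b_d(rt(R))$ and $w$ ranging over children of $b$ in $R$. Fix an integer $k\ge4$; for a subtree $R$ with $m$ vertices, $C_R=V(R)$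 if $k\ge m/2-1$, else $C_R=CV(R,m/k)\cup\{l(R),rt(R)\}$. Canonical subtrees: $T$ is canonical; if $R$ is canonical, each component of $R$ minus $C_R$ is canonical. Each vertex $v$ lies in $C_R$ for exactly one canonical $R$, denoted $T^v$. The spanner $G$ has vertex set $V(T)$ and edges: all edges of $T$, and all pairs of distinct vertices of $C_R$ for every canonical $R$; edge $(a,b)$ has weight $\delta_T(a,b)$. Routing algorithm from current vertex $u$ to destination $v$: Case 0: if $v$ is adjacent to $u$, move to $v$. Case 1: $u$ is an ancestor of $v$; let $X$ be the vertices of $C_{T^u}$ that are ancestors of $v$, $x$ the deepest; move to $x$, then to the child of $x$ that is an ancestor of $v$. Case 2: $u$ is a descendant of $v$; let $X$ be the vertices of $C_{T^u}$ that are descendants of $v$ and ancestors of $u$, $x$ the highest; move to $x$, then to the parent of $x$. Case 3: $u$ is neither; let $X$ be the vertices of $C_{T^u}$ that are ancestors of $v$ but not of $u$, and $Y$ those that are ancestors of $u$ but not of $v$, $y$ the highest vertex of $Y$. Case 3 a): $X=\emptyset$: move to $y$, then to the parent of $y$. Case 3 b): $X\neq\emptyset$: with $x$ the deepest vertex of $X$ and $x'$ the child of $x$ that is an ancestor of $v$, move to $x$, then to $x'$. (Moving to the current vertex means staying.) *)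

theory Defs
  imports Main "HOL.Real"
begin

text \<open>A rooted tree is given by a finite vertex set V, a root r and a parent
function par (the value of par at r is irrelevant).  Edge weights are irrelevant for the routing decisions
and for the claim, and are therefore not modelled.\<close>

definition is_rooted_tree :: "'a set \<Rightarrow> 'a \<Rightarrow> ('a \<Rightarrow> 'a) \<Rightarrow> bool" where
  "is_rooted_tree V r par \<longleftrightarrow> finite V \<and> r \<in> V \<and>
     (\<forall>v\<in>V. v \<noteq> r \<longrightarrow> par v \<in> V) \<and> (\<forall>v\<in>V. \<exists>k. (par ^^ k) v = r)"

definition depth :: "'a \<Rightarrow> ('a \<Rightarrow> 'a) \<Rightarrow> 'a \<Rightarrow> nat" where
  "depth r par v = (LEAST k. (par ^^ k) v = r)"

definition anc :: "'a set \<Rightarrow> 'a \<Rightarrow> ('a \<Rightarrow> 'a) \<Rightarrow> 'a \<Rightarrow> 'a \<Rightarrow> bool" where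
  "anc V r par a b \<longleftrightarrow> b \<in> V \<and> (\<exists>k\<le>depth r par b. (par ^^ k) b = a)"

definition is_child :: "'a set \<Rightarrow> 'a \<Rightarrow> ('a \<Rightarrow> 'a) \<Rightarrow> 'a \<Rightarrow> 'a \<Rightarrow> bool" where
  "is_child V r par c p \<longleftrightarrow> c \<in> V \<and> c \<noteq> r \<and> par c = p"

definition tree_adj :: "'a set \<Rightarrow> 'a \<Rightarrow> ('a \<Rightarrow> 'a) \<Rightarrow> 'a \<Rightarrow> 'a \<Rightarrow> bool" where
  "tree_adj V r par a b \<longleftrightarrow> is_child V r par a b \<or> is_child V r par b a"

definition subtree :: "'a set \<Rightarrow> 'a \<Rightarrow> ('a \<Rightarrow> 'a) \<Rightarrow> 'a \<Rightarrow> 'a set" where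
  "subtree V r par v = {w. anc V r par v w}"

definition leftmost_choice :: "'a set \<Rightarrow> 'a \<Rightarrow> ('a \<Rightarrow> 'a) \<Rightarrow> ('a \<Rightarrow> 'a) \<Rightarrow> bool" where
  "leftmost_choice V r par c1 \<longleftrightarrow> (\<forall>v\<in>V. (\<exists>c. is_child V r par c v) \<longrightarrow>
     is_child V r par (c1 v) v \<and>
     (\<forall>c. is_child V r par c v \<longrightarrow> card (subtree V r par c) \<le> card (subtree V r par (c1 v))))"

definition on_path :: "'a set \<Rightarrow> 'a \<Rightarrow> ('a \<Rightarrow> 'a) \<Rightarrow> 'a \<Rightarrow> 'a \<Rightarrow> 'a \<Rightarrow> bool" where
  "on_path V r par a b w \<longleftrightarrow> (anc V r par w a \<or> anc V r par w b) \<and>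
     (\<forall>z. anc V r par z a \<and> anc V r par z b \<longrightarrow> anc V r par z w)"

text \<open>A vertex set S is connected in T iff it contains the tree path between
any two of its vertices; subtrees of T are the nonempty connected vertex sets.\<close>
definition tconnected :: "'a set \<Rightarrow> 'a \<Rightarrow> ('a \<Rightarrow> 'a) \<Rightarrow> 'a set \<Rightarrow> bool" where
  "tconnected V r par S \<longleftrightarrow> (\<forall>a\<in>S. \<forall>b\<in>S. \<forall>w. on_path V r par a b w \<longrightarrow> w \<in> S)"

definition rt :: "'a \<Rightarrow> ('a \<Rightarrow> 'a) \<Rightarrow> 'a set \<Rightarrow> 'a" where
  "rt r par S = (THE x. x \<in> S \<and> (\<forall>y\<in>S. depth r par x \<le> depth r par y))"

definition sub_in :: "'a set \<Rightarrow> 'a \<Rightarrow> ('a \<Rightarrow> 'a) \<Rightarrow> 'a set \<Rightarrow> 'a \<Rightarrow> 'a set" where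
  "sub_in V r par S v = {w\<in>S. anc V r par v w}"

definition lm_in :: "'a set \<Rightarrow> 'a \<Rightarrow> ('a \<Rightarrow> 'a) \<Rightarrow> ('a \<Rightarrow> 'a) \<Rightarrow> 'a set \<Rightarrow> 'a \<Rightarrow> bool" where
  "lm_in V r par c1 S v \<longleftrightarrow> is_child V r par (c1 v) v \<and> c1 v \<in> S"

text \<open>P_R(v) = (c1^0 v, ..., c1^len v); its last vertex is l(v).\<close>
definition pathlen :: "'a set \<Rightarrow> 'a \<Rightarrow> ('a \<Rightarrow> 'a) \<Rightarrow> ('a \<Rightarrow> 'a) \<Rightarrow> 'a set \<Rightarrow> 'a \<Rightarrow> nat" where
  "pathlen V r par c1 S v = (LEAST j. \<not> lm_in V r par c1 S ((c1 ^^ j) v))"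

definition lend :: "'a set \<Rightarrow> 'a \<Rightarrow> ('a \<Rightarrow> 'a) \<Rightarrow> ('a \<Rightarrow> 'a) \<Rightarrow> 'a set \<Rightarrow> 'a \<Rightarrow> 'a" where
  "lend V r par c1 S v = (c1 ^^ pathlen V r par c1 S v) v"

definition balanced :: "'a set \<Rightarrow> 'a \<Rightarrow> ('a \<Rightarrow> 'a) \<Rightarrow> ('a \<Rightarrow> 'a) \<Rightarrow> 'a set \<Rightarrow> real \<Rightarrow> 'a \<Rightarrow> bool" where
  "balanced V r par c1 S d v \<longleftrightarrow>
     real (if lm_in V r par c1 S v then card (sub_in V r par S (c1 v)) else 0) \<le> real (card S) - d"

text \<open>b_d(v), with None for NULL\<close>
definition bfirst :: "'a set \<Rightarrow> 'a \<Rightarrow> ('a \<Rightarrow> 'a) \<Rightarrow> ('a \<Rightarrow> 'a) \<Rightarrow> 'a set \<Rightarrow> real \<Rightarrow> 'a \<Rightarrow> 'a option" where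
  "bfirst V r par c1 S d v =
     (if \<exists>j\<le>pathlen V r par c1 S v. balanced V r par c1 S d ((c1 ^^ j) v)
      then Some ((c1 ^^ (LEAST j. j \<le> pathlen V r par c1 S v \<and> balanced V r par c1 S d ((c1 ^^ j) v))) v)
      else None)"

text \<open>CV(R,d), as the least set satisfying the (well-founded) recursion.\<close>
inductive in_CV :: "'a set \<Rightarrow> 'a \<Rightarrow> ('a \<Rightarrow> 'a) \<Rightarrow> ('a \<Rightarrow> 'a) \<Rightarrow> 'a set \<Rightarrow> real \<Rightarrow> 'a \<Rightarrow> bool"
  for V r par c1 where
  cv_here: "bfirst V r par c1 S d (rt r par S) = Some b \<Longrightarrow> in_CV V r par c1 S d b"
| cv_rec: "bfirst V r par c1 S d (rt r par S) = Some b \<Longrightarrow> is_child V r par w b \<Longrightarrow> w \<in> S \<Longrightarrow>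
     in_CV V r par c1 (sub_in V r par S w) d x \<Longrightarrow> in_CV V r par c1 S d x"

definition CV :: "'a set \<Rightarrow> 'a \<Rightarrow> ('a \<Rightarrow> 'a) \<Rightarrow> ('a \<Rightarrow> 'a) \<Rightarrow> 'a set \<Rightarrow> real \<Rightarrow> 'a set" where
  "CV V r par c1 S d = {x. in_CV V r par c1 S d x}"

definition Cset :: "'a set \<Rightarrow> 'a \<Rightarrow> ('a \<Rightarrow> 'a) \<Rightarrow> ('a \<Rightarrow> 'a) \<Rightarrow> nat \<Rightarrow> 'a set \<Rightarrow> 'a set" where
  "Cset V r par c1 k S =
     (if real k \<ge> real (card S) / 2 - 1 then S
      else CV V r par c1 S (real (card S) / real k) \<union>
           {lend V r par c1 S (rt r par S), rt r par S})"

definition is_component :: "'a set \<Rightarrow> 'a \<Rightarrow> ('a \<Rightarrow> 'a) \<Rightarrow> 'a set \<Rightarrow> 'a set \<Rightarrow> bool" where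
  "is_component V r par A B \<longleftrightarrow> B \<subseteq> A \<and> B \<noteq> {} \<and> tconnected V r par B \<and>
     (\<forall>B'. B \<subseteq> B' \<and> B' \<subseteq> A \<and> tconnected V r par B' \<longrightarrow> B' = B)"

inductive canonical :: "'a set \<Rightarrow> 'a \<Rightarrow> ('a \<Rightarrow> 'a) \<Rightarrow> ('a \<Rightarrow> 'a) \<Rightarrow> nat \<Rightarrow> 'a set \<Rightarrow> bool"
  for V r par c1 k where
  can_top: "canonical V r par c1 k V"
| can_comp: "canonical V r par c1 k S \<Longrightarrow> is_component V r par (S - Cset V r par c1 k S) S' \<Longrightarrow>
     canonical V r par c1 k S'"

definition Tsup :: "'a set \<Rightarrow> 'a \<Rightarrow> ('a \<Rightarrow> 'a) \<Rightarrow> ('a \<Rightarrow> 'a) \<Rightarrow> nat \<Rightarrow> 'a \<Rightarrow> 'a set" where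
  "Tsup V r par c1 k v = (THE S. canonical V r par c1 k S \<and> v \<in> Cset V r par c1 k S)"

definition G_adj :: "'a set \<Rightarrow> 'a \<Rightarrow> ('a \<Rightarrow> 'a) \<Rightarrow> ('a \<Rightarrow> 'a) \<Rightarrow> nat \<Rightarrow> 'a \<Rightarrow> 'a \<Rightarrow> bool" where
  "G_adj V r par c1 k a b \<longleftrightarrow> a \<in> V \<and> b \<in> V \<and> a \<noteq> b \<and>
     (tree_adj V r par a b \<or>
      (\<exists>S. canonical V r par c1 k S \<and> a \<in> Cset V r par c1 k S \<and> b \<in> Cset V r par c1 k S))"

definition deepest :: "'a \<Rightarrow> ('a \<Rightarrow> 'a) \<Rightarrow> 'a set \<Rightarrow> 'a" where
  "deepest r par X = (THE x. x \<in> X \<and> (\<forall>y\<in>X. depth r par y \<le> depth r par x))"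

definition highest :: "'a \<Rightarrow> ('a \<Rightarrow> 'a) \<Rightarrow> 'a set \<Rightarrow> 'a" where
  "highest r par X = (THE x. x \<in> X \<and> (\<forall>y\<in>X. depth r par x \<le> depth r par y))"

text \<open>The list of vertices visited (in order) when one case of the routing
algorithm is executed at current vertex u with destination v.\<close>
definition route_step :: "'a set \<Rightarrow> 'a \<Rightarrow> ('a \<Rightarrow> 'a) \<Rightarrow> ('a \<Rightarrow> 'a) \<Rightarrow> nat \<Rightarrow> 'a \<Rightarrow> 'a \<Rightarrow> 'a list" where
  "route_step V r par c1 k u v =
    (if G_adj V r par c1 k u v then [v]
     else let C = Cset V r par c1 k (Tsup V r par c1 k u) in
     if anc V r par u v then
       (let x = deepest r par {x\<in>C. anc V r par x v} in
        [x, THE c. is_child V r par c x \<and> anc V r par c v])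
     else if anc V r par v u then
       (let x = highest r par {x\<in>C. anc V r par v x \<and> anc V r par x u} in [x, par x])
     else
       (let X = {x\<in>C. anc V r par x v \<and> \<not> anc V r par x u};
            Y = {y\<in>C. anc V r par y u \<and> \<not> anc V r par y v};
            y = highest r par Y in
        if X = {} then [y, par y]
        else (let x = deepest r par X in
              [x, THE c. is_child V r par c x \<and> anc V r par c v])))"

definition is_tree_path :: "'a set \<Rightarrow> 'a \<Rightarrow> ('a \<Rightarrow> 'a) \<Rightarrow> 'a list \<Rightarrow> 'a \<Rightarrow> 'a \<Rightarrow> bool" where
  "is_tree_path V r par xs u v \<longleftrightarrow> xs \<noteq> [] \<and> hd xs = u \<and> last xs = v \<and> distinct xs \<and>
     set xs \<subseteq> V \<and> (\<forall>i. Suc i < length xs \<longrightarrow> tree_adj V r par (xs ! i) (xs ! Suc i))"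

end

theory Submission
  imports Defs
begin


locale rtree =
  fixes V :: "'a set" and r :: 'a and par :: "'a \<Rightarrow> 'a"
  assumes tree: "is_rooted_tree V r par"
begin

lemma funpow_comb: "(f ^^ m) ((f ^^ n) x) = (f ^^ (m + n)) x"
  by (simp add: funpow_add)

lemma finV: "finite V" and rV: "r \<in> V" and parV: "\<And>v. v \<in> V \<Longrightarrow> v \<noteq> r \<Longrightarrow> par v \<in> V"
  and reach: "\<And>v. v \<in> V \<Longrightarrow> \<exists>k. (par ^^ k) v = r"
  using tree unfolding is_rooted_tree_def by auto

lemma depth_r: "v \<in> V \<Longrightarrow> (par ^^ depth r par v) v = r"
  unfolding depth_def by (rule LeastI_ex, rule reach)

lemma depth_lt: "k < depth r par v \<Longrightarrow> (par ^^ k) v \<noteq> r"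
  unfolding depth_def by (rule not_less_Least)

lemma depth_le: "(par ^^ k) v = r \<Longrightarrow> depth r par v \<le> k"
  unfolding depth_def by (rule Least_le)

lemma iter_in: "v \<in> V \<Longrightarrow> k \<le> depth r par v \<Longrightarrow> (par ^^ k) v \<in> V"
proof (induction k)
  case 0 then show ?case by simp
next
  case (Suc k)
  then have "(par ^^ k) v \<in> V" "(par ^^ k) v \<noteq> r" using depth_lt by auto
  then show ?case by (simp add: parV)
qed

lemma depth_iter: assumes "v \<in> V" "k \<le> depth r par v"
  shows "depth r par ((par ^^ k) v) = depth r par v - k"
proof -
  have e: "(par ^^ (depth r par v - k)) ((par ^^ k) v) = r"
    using assms depth_r[OF assms(1)] by (simp add: funpow_comb)
  have "depth r par ((par ^^ k) v) \<le> depth r par v - k" using depth_le[OF e] .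
  moreover have "depth r par v - k \<le> depth r par ((par ^^ k) v)"
  proof (rule ccontr)
    assume "\<not> ?thesis"
    then have lt: "depth r par ((par ^^ k) v) + k < depth r par v" by simp
    have "(par ^^ (depth r par ((par ^^ k) v) + k)) v = r"
      using depth_r[OF iter_in[OF assms]] by (simp add: funpow_add)
    then show False using depth_lt[OF lt] by simp
  qed
  ultimately show ?thesis by simp
qed

lemma depth0: "v \<in> V \<Longrightarrow> depth r par v = 0 \<Longrightarrow> v = r"
  using depth_r by fastforce

lemma depth_root: "depth r par r = 0"
  using depth_le[of 0 r] by simp

lemma anc_V: "anc V r par a b \<Longrightarrow> a \<in> V \<and> b \<in> V"
  unfolding anc_def using iter_in by blast

lemma anc_depth: assumes "anc V r par a b" shows "depth r par a \<le> depth r par b"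
proof -
  obtain k where k: "k \<le> depth r par b" "(par ^^ k) b = a" "b \<in> V" using assms(1) unfolding anc_def by auto
  have "depth r par a = depth r par b - k" using depth_iter k by blast
  then show ?thesis by simp
qed

lemma anc_refl: "a \<in> V \<Longrightarrow> anc V r par a a"
  unfolding anc_def by (rule conjI, assumption, rule exI[of _ 0], simp)

lemma anc_trans: assumes "anc V r par a b" "anc V r par b c" shows "anc V r par a c"
proof -
  obtain k where k: "k \<le> depth r par c" "(par ^^ k) c = b" "c \<in> V" using assms(2) unfolding anc_def by auto
  obtain m where m: "m \<le> depth r par b" "(par ^^ m) b = a" using assms(1) unfolding anc_def by auto
  have "depth r par b = depth r par c - k" using depth_iter k by blast
  then have "m + k \<le> depth r par c" "(par ^^ (m + k)) c = a" using k m by (auto simp: funpow_add)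
  then show ?thesis using k unfolding anc_def by blast
qed

lemma anc_eq_depth: assumes "anc V r par a b" "depth r par a = depth r par b" shows "a = b"
proof -
  obtain k where k: "k \<le> depth r par b" "(par ^^ k) b = a" "b \<in> V" using assms(1) unfolding anc_def by auto
  have "depth r par a = depth r par b - k" using depth_iter k by blast
  then have "k = 0" using assms(2) k(1) by simp
  then show ?thesis using k by simp
qed

lemma anc_antisym: "anc V r par a b \<Longrightarrow> anc V r par b a \<Longrightarrow> a = b"
  using anc_depth anc_eq_depth le_antisym by blast

lemma anc_chain: assumes "anc V r par a c" "anc V r par b c" "depth r par a \<le> depth r par b"
  shows "anc V r par a b"
proof -
  obtain i where i: "i \<le> depth r par c" "(par ^^ i) c = a" "c \<in> V" using assms(1) unfolding anc_def by auto
  obtain j where j: "j \<le> depth r par c" "(par ^^ j) c = b" using assms(2) unfolding anc_def by auto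
  have "depth r par a = depth r par c - i" "depth r par b = depth r par c - j" using depth_iter i j by auto
  then have ji: "j \<le> i" using assms(3) i j by linarith
  have "(par ^^ (i - j)) b = (par ^^ (i - j + j)) c" using j(2) funpow_comb[where f=par and m="i - j" and n=j and x=c] by simp
  then have "(par ^^ (i - j)) b = a" using i ji by simp
  moreover have "i - j \<le> depth r par b" using \<open>depth r par b = _\<close> i by linarith
  moreover have "b \<in> V" using iter_in i j by blast
  ultimately show ?thesis unfolding anc_def by blast
qed

lemma anc_par: assumes "v \<in> V" "v \<noteq> r" shows "anc V r par (par v) v"
proof -
  have "depth r par v \<noteq> 0" using depth0 assms by blast
  then show ?thesis using assms unfolding anc_def by (intro conjI exI[of _ 1]) auto
qed

lemma depth_par: assumes "v \<in> V" "v \<noteq> r" shows "depth r par (par v) = depth r par v - 1" "depth r par v \<ge> 1"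
proof -
  have "depth r par v \<noteq> 0" using depth0 assms by blast
  then show "depth r par (par v) = depth r par v - 1" "depth r par v \<ge> 1"
    using depth_iter[OF assms(1), of 1] by auto
qed

lemma child_anc: "is_child V r par c p \<Longrightarrow> anc V r par p c"
  unfolding is_child_def using anc_par by blast

lemma anc_r: "v \<in> V \<Longrightarrow> anc V r par r v"
  unfolding anc_def using depth_r by blast

end


context rtree begin

lemma tree_adj_sym: "tree_adj V r par a b = tree_adj V r par b a"
  unfolding tree_adj_def by blast

lemma path_basic: assumes "is_tree_path V r par xs u v"
  shows "xs ! 0 = u" "xs ! (length xs - 1) = v" "length xs > 0" "distinct xs" "set xs \<subseteq> V"
    "\<And>i. Suc i < length xs \<Longrightarrow> tree_adj V r par (xs ! i) (xs ! Suc i)"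
  using assms unfolding is_tree_path_def by (auto simp: hd_conv_nth last_conv_nth)

lemma down_mono: assumes p: "is_tree_path V r par xs u v" and i: "Suc i < length xs"
  and c: "is_child V r par (xs ! Suc i) (xs ! i)"
  shows "i \<le> l \<Longrightarrow> Suc l < length xs \<Longrightarrow> is_child V r par (xs ! Suc l) (xs ! l)"
proof (induction l)
  case 0 then show ?case using c by simp
next
  case (Suc l)
  show ?case
  proof (cases "i = Suc l")
    case True then show ?thesis using c by simp
  next
    case False
    then have IH: "is_child V r par (xs ! Suc l) (xs ! l)" using Suc by simp
    have "tree_adj V r par (xs ! Suc l) (xs ! Suc (Suc l))" using path_basic(6)[OF p] Suc.prems by simp
    moreover have "\<not> is_child V r par (xs ! Suc l) (xs ! Suc (Suc l))"
    proof
      assume "is_child V r par (xs ! Suc l) (xs ! Suc (Suc l))"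
      then have "xs ! l = xs ! Suc (Suc l)" using IH unfolding is_child_def by simp
      then show False using path_basic(4)[OF p] Suc.prems by (simp add: nth_eq_iff_index_eq)
    qed
    ultimately show ?thesis unfolding tree_adj_def by blast
  qed
qed

lemma down_anc: assumes p: "is_tree_path V r par xs u v" and i: "Suc i < length xs"
  and c: "is_child V r par (xs ! Suc i) (xs ! i)"
  shows "i \<le> l \<Longrightarrow> l < length xs \<Longrightarrow> anc V r par (xs ! i) (xs ! l)"
proof (induction l)
  case 0 then show ?case using path_basic(5)[OF p] by (auto intro!: anc_refl)
next
  case (Suc l)
  show ?case
  proof (cases "i = Suc l")
    case True then show ?thesis using path_basic(5)[OF p] Suc.prems by (auto intro!: anc_refl)
  next
    case False
    then have IH: "anc V r par (xs ! i) (xs ! l)" using Suc by simp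
    have "is_child V r par (xs ! Suc l) (xs ! l)" using down_mono[OF p i c] Suc.prems False by simp
    then show ?thesis using IH child_anc anc_trans by blast
  qed
qed

lemma step_up: assumes p: "is_tree_path V r par xs u v" and j: "Suc j < length xs"
  and na: "\<not> anc V r par (xs ! j) v"
  shows "xs ! Suc j = par (xs ! j)"
proof -
  have "tree_adj V r par (xs ! j) (xs ! Suc j)" using path_basic(6)[OF p j] .
  moreover have "\<not> is_child V r par (xs ! Suc j) (xs ! j)"
  proof
    assume "is_child V r par (xs ! Suc j) (xs ! j)"
    from down_anc[OF p j this, of "length xs - 1"] j have "anc V r par (xs ! j) (xs ! (length xs - 1))" by simp
    then show False using na path_basic(2)[OF p] by simp
  qed
  ultimately show ?thesis unfolding tree_adj_def is_child_def by auto
qed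

lemma path_up: assumes p: "is_tree_path V r par xs u v" and uv: "u \<noteq> v"
  and au: "anc V r par a u" and nav: "\<not> anc V r par a v"
  shows "\<exists>i. Suc i < length xs \<and> xs ! i = a \<and> xs ! Suc i = par a"
proof -
  obtain k where k: "k \<le> depth r par u" "(par ^^ k) u = a" "u \<in> V" using au unfolding anc_def by auto
  have vV: "v \<in> V" using path_basic(2,3,5)[OF p] by (metis diff_less in_mono less_numeral_extra(1) nth_mem)
  have nj: "\<not> anc V r par ((par ^^ j) u) v" if "j \<le> k" for j
  proof
    assume h: "anc V r par ((par ^^ j) u) v"
    have "(par ^^ (k - j)) ((par ^^ j) u) = a" using k that funpow_comb[where f=par and m="k-j" and n=j and x=u] by simp
    moreover have "k - j \<le> depth r par ((par ^^ j) u)" using depth_iter[OF k(3), of j] k that by simp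
    moreover have "(par ^^ j) u \<in> V" using iter_in k that by simp
    ultimately have "anc V r par a ((par ^^ j) u)" unfolding anc_def by blast
    then show False using h nav anc_trans by blast
  qed
  have len: "Suc 0 < length xs"
  proof (rule ccontr)
    assume "\<not> ?thesis"
    then have "length xs = 1" using path_basic(3)[OF p] by linarith
    then show False using path_basic(1,2)[OF p] uv by simp
  qed
  have main: "j \<le> k \<Longrightarrow> xs ! j = (par ^^ j) u \<and> Suc j < length xs" for j
  proof (induction j)
    case 0 then show ?case using path_basic(1)[OF p] len by simp
  next
    case (Suc j)
    then have IH: "xs ! j = (par ^^ j) u" "Suc j < length xs" by auto
    have e: "xs ! Suc j = (par ^^ Suc j) u" using step_up[OF p IH(2)] IH(1) nj[of j] Suc.prems by simp
    moreover have "Suc (Suc j) < length xs"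
    proof (rule ccontr)
      assume "\<not> ?thesis"
      then have "Suc j = length xs - 1" using IH(2) by simp
      then have "xs ! Suc j = v" using path_basic(2)[OF p] by simp
      then show False using nj[OF Suc.prems] e anc_refl[OF vV] by simp
    qed
    ultimately show ?case by simp
  qed
  from main[of k] have "xs ! k = a" "Suc k < length xs" using k by auto
  moreover have "xs ! Suc k = par a" using step_up[OF p \<open>Suc k < length xs\<close>] \<open>xs ! k = a\<close> nav by simp
  ultimately show ?thesis by blast
qed

lemma rev_path: assumes p: "is_tree_path V r par xs u v" shows "is_tree_path V r par (rev xs) v u"
proof -
  have "tree_adj V r par (rev xs ! i) (rev xs ! Suc i)" if i: "Suc i < length (rev xs)" for i
  proof -
    define n where "n = length xs"
    have "tree_adj V r par (xs ! (n - Suc (Suc i))) (xs ! Suc (n - Suc (Suc i)))"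
      using path_basic(6)[OF p] i unfolding n_def by simp
    moreover have "Suc (n - Suc (Suc i)) = n - Suc i" using i unfolding n_def by simp
    ultimately show ?thesis using i unfolding n_def by (simp add: rev_nth tree_adj_sym)
  qed
  then show ?thesis using p unfolding is_tree_path_def by (simp add: hd_rev last_rev)
qed

lemma path_down: assumes p: "is_tree_path V r par xs u v" and uv: "u \<noteq> v"
  and av: "anc V r par a v" and nau: "\<not> anc V r par a u"
  shows "\<exists>i. Suc i < length xs \<and> xs ! i = par a \<and> xs ! Suc i = a"
proof -
  obtain i where i: "Suc i < length (rev xs)" "rev xs ! i = a" "rev xs ! Suc i = par a"
    using path_up[OF rev_path[OF p] uv[symmetric] av nau] by blast
  define n where "n = length xs"
  have "Suc (n - Suc (Suc i)) = n - Suc i" using i unfolding n_def by simp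
  then have "xs ! (n - Suc (Suc i)) = par a" "xs ! Suc (n - Suc (Suc i)) = a" "Suc (n - Suc (Suc i)) < length xs"
    using i unfolding n_def by (auto simp: rev_nth)
  then show ?thesis by blast
qed

end


context rtree begin

lemma lca_ex: assumes "a \<in> V" "b \<in> V"
  shows "\<exists>z. anc V r par z a \<and> anc V r par z b \<and> (\<forall>y. anc V r par y a \<and> anc V r par y b \<longrightarrow> anc V r par y z)"
proof -
  let ?P = "\<lambda>y. anc V r par y a \<and> anc V r par y b"
  have "?P r" using anc_r assms by blast
  moreover have "\<forall>y. ?P y \<longrightarrow> depth r par y < Suc (depth r par a)" using anc_depth by (simp add: le_imp_less_Suc)
  ultimately obtain z where z: "?P z" "\<forall>y. ?P y \<longrightarrow> depth r par y \<le> depth r par z"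
    using Lattices_Big.ex_has_greatest_nat[where P="?P" and f="depth r par"] by blast
  then show ?thesis using anc_chain by blast
qed

lemma on_path_sym: "on_path V r par a b w = on_path V r par b a w"
  unfolding on_path_def by blast

lemma on_path_V: "on_path V r par a b w \<Longrightarrow> w \<in> V"
  unfolding on_path_def using anc_V by blast

lemma median_a: assumes op: "on_path V r par a b w" and wa: "anc V r par w a" and cV: "c \<in> V"
  shows "on_path V r par a c w \<or> on_path V r par c b w"
proof -
  have aV: "a \<in> V" using wa anc_V by blast
  have com: "\<And>z. anc V r par z a \<Longrightarrow> anc V r par z b \<Longrightarrow> anc V r par z w" using op unfolding on_path_def by blast
  show ?thesis
  proof (cases "anc V r par w c")
    case False
    have "on_path V r par a c w" unfolding on_path_def
    proof (intro conjI allI impI)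
      show "anc V r par w a \<or> anc V r par w c" using wa by simp
      fix z assume z: "anc V r par z a \<and> anc V r par z c"
      show "anc V r par z w"
      proof (cases "depth r par z \<le> depth r par w")
        case True then show ?thesis using z anc_chain[OF _ wa True] by blast
      next
        case False
        then have "anc V r par w z" using z anc_chain[OF wa, of z] by simp
        then show ?thesis using z anc_trans \<open>\<not> anc V r par w c\<close> by blast
      qed
    qed
    then show ?thesis by simp
  next
    case wc: True
    obtain m where m: "anc V r par m a" "anc V r par m c"
      "\<forall>y. anc V r par y a \<and> anc V r par y c \<longrightarrow> anc V r par y m" using lca_ex[OF aV cV] by blast
    have wm: "anc V r par w m" using m wa wc by blast
    show ?thesis
    proof (cases "w = m")
      case True
      then have "on_path V r par a c w" using m wa unfolding on_path_def by blast
      then show ?thesis by simp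
    next
      case wnm: False
      have "on_path V r par c b w" unfolding on_path_def
      proof (intro conjI allI impI)
        show "anc V r par w c \<or> anc V r par w b" using wc by simp
        fix z assume z: "anc V r par z c \<and> anc V r par z b"
        show "anc V r par z w"
        proof (cases "depth r par z \<le> depth r par w")
          case True then show ?thesis using z anc_chain[OF _ wc True] by blast
        next
          case False
          then have wz: "anc V r par w z" using z anc_chain[OF wc, of z] by simp
          have "w \<noteq> z" using False by auto
          show ?thesis
          proof (cases "depth r par z \<le> depth r par m")
            case True
            then have "anc V r par z m" using z m(2) anc_chain[of z c m] by blast
            then have "anc V r par z a" using m anc_trans by blast
            then have "anc V r par z w" using com z by blast
            then show ?thesis .
          next
            case False
            then have "anc V r par m z" using z m(2) anc_chain[of m c z] by simp
            then have "anc V r par m b" using z anc_trans by blast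
            then have "anc V r par m w" using com m by blast
            then have "m = w" using wm anc_antisym by blast
            then show ?thesis using wnm by simp
          qed
        qed
      qed
      then show ?thesis by simp
    qed
  qed
qed

lemma median: assumes op: "on_path V r par a b w" and cV: "c \<in> V"
  shows "on_path V r par a c w \<or> on_path V r par c b w"
proof -
  have "anc V r par w a \<or> anc V r par w b" using op unfolding on_path_def by blast
  then show ?thesis
  proof
    assume "anc V r par w a" then show ?thesis using median_a op cV by blast
  next
    assume "anc V r par w b"
    moreover have "on_path V r par b a w" using op on_path_sym by simp
    ultimately have "on_path V r par b c w \<or> on_path V r par c a w" using median_a cV by blast
    then show ?thesis using on_path_sym[of b c w] on_path_sym[of c a w] by blast
  qed
qed

lemma union_conn: assumes "tconnected V r par B1" "tconnected V r par B2" "c \<in> B1" "c \<in> B2" "c \<in> V"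
  shows "tconnected V r par (B1 \<union> B2)"
  unfolding tconnected_def
proof (intro ballI allI impI)
  fix a b w assume a: "a \<in> B1 \<union> B2" and b: "b \<in> B1 \<union> B2" and op: "on_path V r par a b w"
  have m: "on_path V r par a c w \<or> on_path V r par c b w" using median[OF op assms(5)] .
  from a b show "w \<in> B1 \<union> B2"
  proof (elim UnE)
    assume "a \<in> B1" "b \<in> B1" then show ?thesis using op assms(1) unfolding tconnected_def by blast
  next
    assume "a \<in> B2" "b \<in> B2" then show ?thesis using op assms(2) unfolding tconnected_def by blast
  next
    assume "a \<in> B1" "b \<in> B2" then show ?thesis using m assms unfolding tconnected_def by blast
  next
    assume "a \<in> B2" "b \<in> B1" then show ?thesis using m assms unfolding tconnected_def by blast
  qed
qed

lemma single_conn: assumes "u \<in> V" shows "tconnected V r par {u}"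
  unfolding tconnected_def on_path_def using anc_refl[OF assms] anc_antisym by blast

lemma V_conn: "tconnected V r par V"
  unfolding tconnected_def using on_path_V by blast

lemma rt_prop: assumes "S \<subseteq> V" "S \<noteq> {}" "tconnected V r par S"
  shows "rt r par S \<in> S" "\<forall>y\<in>S. depth r par (rt r par S) \<le> depth r par y"
proof -
  obtain s where s: "s \<in> S" using assms by blast
  obtain x where x: "x \<in> S" "\<forall>y. y \<in> S \<longrightarrow> depth r par x \<le> depth r par y"
    using ex_has_least_nat[where P="\<lambda>y. y \<in> S" and m="depth r par", OF s] by blast
  have uniq: "x' = x" if x': "x' \<in> S" "\<forall>y\<in>S. depth r par x' \<le> depth r par y" for x'
  proof -
    have V: "x \<in> V" "x' \<in> V" using x x' assms by auto
    obtain z where z: "anc V r par z x" "anc V r par z x'"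
      "\<forall>y. anc V r par y x \<and> anc V r par y x' \<longrightarrow> anc V r par y z" using lca_ex[OF V] by blast
    have "on_path V r par x x' z" unfolding on_path_def using z by blast
    then have "z \<in> S" using assms(3) x(1) x'(1) unfolding tconnected_def by (elim ballE allE) auto
    have "depth r par z \<le> depth r par x" "depth r par z \<le> depth r par x'"
      using z anc_depth by auto
    moreover have "depth r par x \<le> depth r par z" "depth r par x' \<le> depth r par z"
      using x x' \<open>z \<in> S\<close> by auto
    ultimately have "depth r par z = depth r par x" "depth r par z = depth r par x'" by auto
    then have "z = x" "z = x'" using z(1,2) anc_eq_depth by auto
    then show ?thesis by simp
  qed
  have "rt r par S = x" unfolding rt_def
  proof (rule the_equality)
    show "x \<in> S \<and> (\<forall>y\<in>S. depth r par x \<le> depth r par y)" using x by blast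
    show "\<And>x'. x' \<in> S \<and> (\<forall>y\<in>S. depth r par x' \<le> depth r par y) \<Longrightarrow> x' = x" using uniq by blast
  qed
  then show "rt r par S \<in> S" "\<forall>y\<in>S. depth r par (rt r par S) \<le> depth r par y" using x by auto
qed

lemma rt_sub: assumes "w \<in> S" "w \<in> V" shows "rt r par (sub_in V r par S w) = w"
  unfolding rt_def
proof (rule the_equality)
  show "w \<in> sub_in V r par S w \<and> (\<forall>y\<in>sub_in V r par S w. depth r par w \<le> depth r par y)"
    using assms anc_refl anc_depth unfolding sub_in_def by auto
next
  fix x assume "x \<in> sub_in V r par S w \<and> (\<forall>y\<in>sub_in V r par S w. depth r par x \<le> depth r par y)"
  then have "anc V r par w x" "depth r par x \<le> depth r par w" using assms anc_refl unfolding sub_in_def by auto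
  moreover then have "depth r par w \<le> depth r par x" using anc_depth by blast
  ultimately have "depth r par w = depth r par x" by simp
  then show "x = w" using anc_eq_depth[OF \<open>anc V r par w x\<close>] by simp
qed

lemma deepest_prop: assumes "finite X" "X \<noteq> {}" "\<forall>x\<in>X. anc V r par x c"
  shows "deepest r par X \<in> X" "\<forall>y\<in>X. depth r par y \<le> depth r par (deepest r par X)"
proof -
  obtain x where x: "x \<in> X" "depth r par x = Max (depth r par ` X)"
  proof -
    have "Max (depth r par ` X) \<in> depth r par ` X" using Max_in[of "depth r par ` X"] assms by auto
    then show ?thesis using that by auto
  qed
  have xm: "\<forall>y\<in>X. depth r par y \<le> depth r par x" using x assms by simp
  have "deepest r par X = x" unfolding deepest_def
  proof (rule the_equality)
    show "x \<in> X \<and> (\<forall>y\<in>X. depth r par y \<le> depth r par x)" using x xm by simp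
  next
    fix x' assume h: "x' \<in> X \<and> (\<forall>y\<in>X. depth r par y \<le> depth r par x')"
    then have "depth r par x' = depth r par x" using xm x le_antisym by blast
    moreover have "anc V r par x' x" using anc_chain[of x' c x] assms h x \<open>depth r par x' = depth r par x\<close> by simp
    ultimately show "x' = x" using anc_eq_depth by blast
  qed
  then show "deepest r par X \<in> X" "\<forall>y\<in>X. depth r par y \<le> depth r par (deepest r par X)" using x xm by auto
qed

lemma highest_prop: assumes "X \<noteq> {}" "\<forall>x\<in>X. anc V r par x c"
  shows "highest r par X \<in> X" "\<forall>y\<in>X. depth r par (highest r par X) \<le> depth r par y"
proof -
  obtain s where s: "s \<in> X" using assms by blast
  obtain x where x: "x \<in> X" "\<forall>y. y \<in> X \<longrightarrow> depth r par x \<le> depth r par y"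
    using ex_has_least_nat[where P="\<lambda>y. y \<in> X" and m="depth r par", OF s] by blast
  have "highest r par X = x" unfolding highest_def
  proof (rule the_equality)
    show "x \<in> X \<and> (\<forall>y\<in>X. depth r par x \<le> depth r par y)" using x by simp
  next
    fix x' assume h: "x' \<in> X \<and> (\<forall>y\<in>X. depth r par x' \<le> depth r par y)"
    then have "depth r par x' = depth r par x" using x le_antisym by blast
    moreover have "anc V r par x' x" using anc_chain[of x' c x] assms(2) h x \<open>depth r par x' = depth r par x\<close> by simp
    ultimately show "x' = x" using anc_eq_depth by blast
  qed
  then show "highest r par X \<in> X" "\<forall>y\<in>X. depth r par (highest r par X) \<le> depth r par y" using x by auto
qed

lemma child_toward: assumes "anc V r par x v" "x \<noteq> v"
  shows "is_child V r par (THE c. is_child V r par c x \<and> anc V r par c v) x \<and>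
         anc V r par (THE c. is_child V r par c x \<and> anc V r par c v) v"
proof -
  obtain k where k: "k \<le> depth r par v" "(par ^^ k) v = x" "v \<in> V" using assms(1) unfolding anc_def by auto
  have k0: "k \<noteq> 0" proof assume "k = 0" then show False using k assms by simp qed
  define c where "c = (par ^^ (k - 1)) v"
  have cV: "c \<in> V" using iter_in k unfolding c_def by simp
  have cv: "anc V r par c v" unfolding anc_def c_def
    by (rule conjI, rule k(3), rule exI[of _ "k - 1"]) (use k in simp)
  obtain k' where k': "k = Suc k'" using k0 not0_implies_Suc by blast
  have pc: "par c = x" using k(2) unfolding c_def k' by simp
  have "depth r par c = depth r par v - (k - 1)" unfolding c_def by (rule depth_iter[OF k(3)]) (use k(1) in simp)
  then have "depth r par c \<ge> 1" using k(1) k' by simp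
  then have cr: "c \<noteq> r" using depth_root by (metis not_one_le_zero)
  have ch: "is_child V r par c x" unfolding is_child_def using cV cr pc by simp
  have uniq: "c' = c" if "is_child V r par c' x \<and> anc V r par c' v" for c'
  proof -
    have dd: "depth r par c' = depth r par x + 1" "depth r par c = depth r par x + 1"
    proof -
      have a: "c' \<in> V" "c' \<noteq> r" "par c' = x" using that unfolding is_child_def by auto
      show "depth r par c' = depth r par x + 1" using depth_par[OF a(1,2)] a(3) by simp
      show "depth r par c = depth r par x + 1" using depth_par[OF cV cr] pc by simp
    qed
    then have "anc V r par c' c" using anc_chain[of c' v c] that cv by simp
    then show ?thesis using anc_eq_depth dd by simp
  qed
  have "(THE c. is_child V r par c x \<and> anc V r par c v) = c"
    by (rule the_equality) (rule conjI[OF ch cv], rule uniq)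
  then show ?thesis using ch cv by simp
qed

end



inductive lvl :: "'a set \<Rightarrow> 'a \<Rightarrow> ('a \<Rightarrow> 'a) \<Rightarrow> ('a \<Rightarrow> 'a) \<Rightarrow> nat \<Rightarrow> nat \<Rightarrow> 'a set \<Rightarrow> bool"
  for V r par c1 k where
  lvl0: "lvl V r par c1 k 0 V"
| lvlS: "lvl V r par c1 k n S \<Longrightarrow> is_component V r par (S - Cset V r par c1 k S) S' \<Longrightarrow>
     lvl V r par c1 k (Suc n) S'"

context rtree begin

lemma iter_c1_in: "v \<in> S \<Longrightarrow> j \<le> pathlen V r par c1 S v \<Longrightarrow> (c1 ^^ j) v \<in> S"
proof (induction j)
  case 0 then show ?case by simp
next
  case (Suc j)
  then have "j < pathlen V r par c1 S v" by simp
  then have "lm_in V r par c1 S ((c1 ^^ j) v)" unfolding pathlen_def by (rule not_less_Least[THEN notnotD])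
  then show ?case unfolding lm_in_def by simp
qed

lemma bfirst_in: assumes "v \<in> S" "bfirst V r par c1 S d v = Some b" shows "b \<in> S"
proof -
  let ?P = "\<lambda>j. j \<le> pathlen V r par c1 S v \<and> balanced V r par c1 S d ((c1 ^^ j) v)"
  have ex: "\<exists>j. ?P j" and b: "b = (c1 ^^ (LEAST j. ?P j)) v"
    using assms(2) unfolding bfirst_def by (auto split: if_splits)
  have "?P (LEAST j. ?P j)" using ex by (rule LeastI_ex)
  then show ?thesis using iter_c1_in[OF assms(1)] b by blast
qed

lemma CV_in: "in_CV V r par c1 S d x \<Longrightarrow> rt r par S \<in> S \<Longrightarrow> x \<in> S"
proof (induction rule: in_CV.induct)
  case (cv_here S d b)
  then show ?case using bfirst_in by blast
next
  case (cv_rec S d b w x)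
  have wV: "w \<in> V" using cv_rec(2) unfolding is_child_def by simp
  have "rt r par (sub_in V r par S w) \<in> sub_in V r par S w"
    using rt_sub[OF cv_rec(3) wV] cv_rec(3) anc_refl[OF wV] unfolding sub_in_def by simp
  then have "x \<in> sub_in V r par S w" using cv_rec(5) by blast
  then show ?case unfolding sub_in_def by simp
qed

lemma lend_in: "v \<in> S \<Longrightarrow> lend V r par c1 S v \<in> S"
  unfolding lend_def using iter_c1_in by blast

lemma canon_props: "canonical V r par c1 k S \<Longrightarrow> S \<subseteq> V \<and> S \<noteq> {} \<and> tconnected V r par S"
proof (induction rule: canonical.induct)
  case can_top then show ?case using rV V_conn by blast
next
  case (can_comp S S') then show ?case unfolding is_component_def by blast
qed

lemma Cset_sub: assumes "canonical V r par c1 k S"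
  shows "Cset V r par c1 k S \<subseteq> S" "rt r par S \<in> Cset V r par c1 k S"
proof -
  have rS: "rt r par S \<in> S" using rt_prop(1) canon_props[OF assms] by blast
  show "Cset V r par c1 k S \<subseteq> S" unfolding Cset_def CV_def using rS CV_in lend_in by auto
  show "rt r par S \<in> Cset V r par c1 k S" unfolding Cset_def using rS by auto
qed

lemma comp_eq: assumes "A \<subseteq> V" "is_component V r par A B1" "is_component V r par A B2" "c \<in> B1" "c \<in> B2"
  shows "B1 = B2"
proof -
  have c: "tconnected V r par B1" "tconnected V r par B2" "B1 \<subseteq> A" "B2 \<subseteq> A"
    using assms(2,3) unfolding is_component_def by auto
  have u: "tconnected V r par (B1 \<union> B2)" using union_conn[OF c(1,2) assms(4,5)] assms c by blast
  have "B1 \<union> B2 = B1" using assms(2) u c unfolding is_component_def by blast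
  moreover have "B1 \<union> B2 = B2" using assms(3) u c unfolding is_component_def by blast
  ultimately show ?thesis by simp
qed

lemma comp_ex: assumes "A \<subseteq> V" "u \<in> A" shows "\<exists>B. is_component V r par A B \<and> u \<in> B"
proof -
  define F where "F = {B'. B' \<subseteq> A \<and> u \<in> B' \<and> tconnected V r par B'}"
  define B where "B = \<Union>F"
  have uV: "u \<in> V" using assms by blast
  have sF: "{u} \<in> F" unfolding F_def using single_conn[OF uV] assms by simp
  have BA: "B \<subseteq> A" unfolding B_def F_def by blast
  have uB: "u \<in> B" using sF unfolding B_def by blast
  have conn: "tconnected V r par B" unfolding tconnected_def
  proof (intro ballI allI impI)
    fix a b w assume a: "a \<in> B" and b: "b \<in> B" and op: "on_path V r par a b w"
    obtain B1 where B1: "B1 \<in> F" "a \<in> B1" using a unfolding B_def by blast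
    obtain B2 where B2: "B2 \<in> F" "b \<in> B2" using b unfolding B_def by blast
    have "tconnected V r par (B1 \<union> B2)"
      using union_conn[of B1 B2 u] B1 B2 uV unfolding F_def by blast
    then have "w \<in> B1 \<union> B2" using op B1 B2 unfolding tconnected_def by blast
    then show "w \<in> B" using B1 B2 unfolding B_def by blast
  qed
  have "is_component V r par A B" unfolding is_component_def
  proof (intro conjI allI impI)
    show "B \<subseteq> A" "B \<noteq> {}" "tconnected V r par B" using BA uB conn by auto
    fix B' assume "B \<subseteq> B' \<and> B' \<subseteq> A \<and> tconnected V r par B'"
    then have "B' \<in> F" using uB unfolding F_def by blast
    then have "B' \<subseteq> B" unfolding B_def by blast
    then show "B' = B" using \<open>B \<subseteq> B' \<and> _\<close> by blast
  qed
  then show ?thesis using uB by blast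
qed

lemma lvl_canon: "lvl V r par c1 k n S \<Longrightarrow> canonical V r par c1 k S"
  by (induction rule: lvl.induct) (auto intro: canonical.intros)

lemma canon_lvl: "canonical V r par c1 k S \<Longrightarrow> \<exists>n. lvl V r par c1 k n S"
  by (induction rule: canonical.induct) (auto intro: lvl.intros)

lemma lvl_same: "lvl V r par c1 k n S1 \<Longrightarrow> lvl V r par c1 k n S2 \<Longrightarrow> c \<in> S1 \<Longrightarrow> c \<in> S2 \<Longrightarrow> S1 = S2"
proof (induction arbitrary: S2 c rule: lvl.induct)
  case lvl0
  then show ?case by (cases rule: lvl.cases) auto
next
  case (lvlS n S S')
  from lvlS.prems(1) obtain S0 where S0: "lvl V r par c1 k n S0" "is_component V r par (S0 - Cset V r par c1 k S0) S2"
    by (cases rule: lvl.cases) auto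
  have "S' \<subseteq> S" "S2 \<subseteq> S0" using lvlS.hyps(2) S0(2) unfolding is_component_def by auto
  then have "S = S0" using lvlS.IH[OF S0(1)] lvlS.prems by blast
  moreover have "S0 \<subseteq> V" using canon_props[OF lvl_canon[OF S0(1)]] by blast
  ultimately show ?case using comp_eq[of "S0 - Cset V r par c1 k S0" S' S2 c] lvlS.hyps(2) S0(2) lvlS.prems by blast
qed

lemma lvl_below: "lvl V r par c1 k m S \<Longrightarrow> n < m \<Longrightarrow>
   \<exists>S0. lvl V r par c1 k n S0 \<and> S \<subseteq> S0 \<and> S \<inter> Cset V r par c1 k S0 = {}"
proof (induction arbitrary: n rule: lvl.induct)
  case lvl0 then show ?case by simp
next
  case (lvlS m S S')
  have sub: "S' \<subseteq> S - Cset V r par c1 k S" using lvlS.hyps(2) unfolding is_component_def by blast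
  show ?case
  proof (cases "n = m")
    case True then show ?thesis using lvlS.hyps(1) sub by blast
  next
    case False
    then obtain S0 where "lvl V r par c1 k n S0" "S \<subseteq> S0" "S \<inter> Cset V r par c1 k S0 = {}"
      using lvlS.IH[of n] lvlS.prems False by auto
    then show ?thesis using sub by blast
  qed
qed

lemma Tsup_uniq: assumes "canonical V r par c1 k S1" "canonical V r par c1 k S2"
  "u \<in> Cset V r par c1 k S1" "u \<in> Cset V r par c1 k S2" shows "S1 = S2"
proof -
  obtain n1 where n1: "lvl V r par c1 k n1 S1" using canon_lvl assms by blast
  obtain n2 where n2: "lvl V r par c1 k n2 S2" using canon_lvl assms by blast
  have u1: "u \<in> S1" and u2: "u \<in> S2" using Cset_sub assms by blast+
  have gen: "lvl V r par c1 k n1 S1 \<Longrightarrow> lvl V r par c1 k n2 S2 \<Longrightarrow> u \<in> Cset V r par c1 k S1 \<Longrightarrow>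
     u \<in> S1 \<Longrightarrow> u \<in> S2 \<Longrightarrow> n1 < n2 \<Longrightarrow> False" for n1 n2 S1 S2
  proof -
    assume h: "lvl V r par c1 k n1 S1" "lvl V r par c1 k n2 S2" "u \<in> Cset V r par c1 k S1"
       "u \<in> S1" "u \<in> S2" "n1 < n2"
    obtain S0 where S0: "lvl V r par c1 k n1 S0" "S2 \<subseteq> S0" "S2 \<inter> Cset V r par c1 k S0 = {}"
      using lvl_below[OF h(2) h(6)] by blast
    have "S0 = S1" using lvl_same[OF S0(1) h(1), of u] S0(2) h by blast
    then show False using S0(3) h(3,5) by blast
  qed
  show ?thesis
  proof (cases n1 n2 rule: linorder_cases)
    case less then show ?thesis using gen[OF n1 n2 assms(3) u1 u2] by blast
  next
    case equal then show ?thesis using lvl_same[OF n1, of S2 u] n2 u1 u2 by blast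
  next
    case greater then show ?thesis using gen[OF n2 n1 assms(4) u2 u1] by blast
  qed
qed

lemma Tsup_ex: "canonical V r par c1 k S \<Longrightarrow> u \<in> S \<Longrightarrow> \<exists>S'. canonical V r par c1 k S' \<and> u \<in> Cset V r par c1 k S'"
proof (induction "card S" arbitrary: S rule: less_induct)
  case less
  show ?case
  proof (cases "u \<in> Cset V r par c1 k S")
    case True then show ?thesis using less.prems by blast
  next
    case False
    have SV: "S \<subseteq> V" using canon_props[OF less.prems(1)] by blast
    obtain B where B: "is_component V r par (S - Cset V r par c1 k S) B" "u \<in> B"
      using comp_ex[of "S - Cset V r par c1 k S" u] SV less.prems False by blast
    have cB: "canonical V r par c1 k B" using canonical.can_comp[OF less.prems(1) B(1)] .
    have "B \<subseteq> S - {rt r par S}" using B(1) Cset_sub(2)[OF less.prems(1)] unfolding is_component_def by blast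
    moreover have "rt r par S \<in> S" using Cset_sub[OF less.prems(1)] by blast
    moreover have "finite S" using SV finV finite_subset by blast
    ultimately have "card B \<le> card (S - {rt r par S})" "card (S - {rt r par S}) = card S - 1" "card S > 0"
      using card_mono[of "S - {rt r par S}" B] card_gt_0_iff by auto
    then have "card B < card S" by linarith
    then show ?thesis using less.hyps[OF _ cB B(2)] by blast
  qed
qed

lemma Tsup_prop: assumes "u \<in> V"
  shows "canonical V r par c1 k (Tsup V r par c1 k u) \<and> u \<in> Cset V r par c1 k (Tsup V r par c1 k u)"
proof -
  obtain S where S: "canonical V r par c1 k S" "u \<in> Cset V r par c1 k S"
    using Tsup_ex[OF canonical.can_top assms] by blast
  have "\<exists>!S. canonical V r par c1 k S \<and> u \<in> Cset V r par c1 k S" using S Tsup_uniq by blast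
  then show ?thesis unfolding Tsup_def by (rule theI')
qed

end


context rtree begin

lemma fin2: assumes "Suc i < length xs" "xs ! i = a" "xs ! Suc i = b"
  shows "\<forall>j1 j2. j1 \<le> j2 \<and> j2 < length [a, b] \<longrightarrow>
           (\<exists>i1 i2. i1 \<le> i2 \<and> i2 < length xs \<and> [a, b] ! j1 = xs ! i1 \<and> [a, b] ! j2 = xs ! i2)"
proof (intro allI impI)
  fix j1 j2 :: nat assume h: "j1 \<le> j2 \<and> j2 < length [a, b]"
  then have "(j1 = 0 \<and> j2 = 0) \<or> (j1 = 0 \<and> j2 = 1) \<or> (j1 = 1 \<and> j2 = 1)" by auto
  then show "\<exists>i1 i2. i1 \<le> i2 \<and> i2 < length xs \<and> [a, b] ! j1 = xs ! i1 \<and> [a, b] ! j2 = xs ! i2"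
  proof (elim disjE conjE)
    assume "j1 = 0" "j2 = 0" then show ?thesis using assms by (intro exI[of _ i]) auto
  next
    assume "j1 = 0" "j2 = 1" then show ?thesis using assms by (intro exI[of _ i] exI[of _ "Suc i"]) auto
  next
    assume "j1 = 1" "j2 = 1" then show ?thesis using assms by (intro exI[of _ "Suc i"]) auto
  qed
qed

lemma main:
  assumes "u \<in> V" "v \<in> V" "u \<noteq> v" and p: "is_tree_path V r par xs u v"
  shows "route_step V r par c1 k u v = [v] \<or> (\<exists>a b. route_step V r par c1 k u v = [a, b] \<and>
     (\<exists>i. Suc i < length xs \<and> xs ! i = a \<and> xs ! Suc i = b))"
proof (cases "G_adj V r par c1 k u v")
  case True then show ?thesis unfolding route_step_def by simp
next
  case ng: False
  define S where "S = Tsup V r par c1 k u"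
  define C where "C = Cset V r par c1 k S"
  have cS: "canonical V r par c1 k S" and uC: "u \<in> C" using Tsup_prop[OF assms(1)] unfolding S_def C_def by auto
  have CV: "C \<subseteq> V" using Cset_sub(1)[OF cS] canon_props[OF cS] unfolding C_def by blast
  have finC: "finite C" using CV finV finite_subset by blast
  have vC: "v \<notin> C"
  proof
    assume "v \<in> C"
    then have "G_adj V r par c1 k u v" unfolding G_adj_def using assms uC cS unfolding C_def by blast
    then show False using ng by simp
  qed
  define X1 where "X1 = {x\<in>C. anc V r par x v}"
  define x1 where "x1 = deepest r par X1"
  define X2 where "X2 = {x\<in>C. anc V r par v x \<and> anc V r par x u}"
  define x2 where "x2 = highest r par X2"
  define X3 where "X3 = {x\<in>C. anc V r par x v \<and> \<not> anc V r par x u}"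
  define Y3 where "Y3 = {y\<in>C. anc V r par y u \<and> \<not> anc V r par y v}"
  define y3 where "y3 = highest r par Y3"
  define x3 where "x3 = deepest r par X3"
  have RS: "route_step V r par c1 k u v =
     (if anc V r par u v then [x1, THE c. is_child V r par c x1 \<and> anc V r par c v]
      else if anc V r par v u then [x2, par x2]
      else if X3 = {} then [y3, par y3] else [x3, THE c. is_child V r par c x3 \<and> anc V r par c v])"
    unfolding route_step_def Let_def if_not_P[OF ng] x1_def X1_def x2_def X2_def X3_def Y3_def y3_def x3_def
      C_def S_def by (rule refl)
  show ?thesis
  proof (cases "anc V r par u v")
    case uv: True
    have X1: "finite X1" "X1 \<noteq> {}" "\<forall>x\<in>X1. anc V r par x v" using finC uC uv unfolding X1_def by auto
    have x1: "x1 \<in> X1" "\<forall>y\<in>X1. depth r par y \<le> depth r par x1" using deepest_prop[OF X1] unfolding x1_def by auto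
    have "u \<in> X1" using uC uv unfolding X1_def by simp
    then have "depth r par u \<le> depth r par x1" using x1(2) by blast
    then have ux: "anc V r par u x1" using anc_chain[of u v x1] uv x1(1) unfolding X1_def by simp
    have xv: "anc V r par x1 v" "x1 \<noteq> v" using x1(1) vC unfolding X1_def by auto
    define c where "c = (THE c. is_child V r par c x1 \<and> anc V r par c v)"
    have c: "is_child V r par c x1" "anc V r par c v" using child_toward[OF xv] unfolding c_def by auto
    have "\<not> anc V r par c u"
    proof
      assume "anc V r par c u"
      then have "anc V r par c x1" using ux anc_trans by blast
      then have "depth r par c \<le> depth r par x1" using anc_depth by blast
      moreover have "c \<in> V" "c \<noteq> r" "par c = x1" using c(1) unfolding is_child_def by auto
      then have "depth r par x1 = depth r par c - 1" "depth r par c \<ge> 1"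
        using depth_par[of c] by auto
      ultimately show False by linarith
    qed
    then obtain i where "Suc i < length xs" "xs ! i = par c" "xs ! Suc i = c"
      using path_down[OF p assms(3) c(2)] by blast
    moreover have "par c = x1" using c(1) unfolding is_child_def by simp
    ultimately show ?thesis using RS uv unfolding c_def by auto
  next
    case nuv: False
    show ?thesis
    proof (cases "anc V r par v u")
      case vu: True
      have X2: "X2 \<noteq> {}" "\<forall>x\<in>X2. anc V r par x u" using uC vu anc_refl[OF assms(1)] unfolding X2_def by auto
      have x2: "x2 \<in> X2" using highest_prop[OF X2] unfolding x2_def by auto
      have "\<not> anc V r par x2 v"
      proof
        assume "anc V r par x2 v"
        moreover have "anc V r par v x2" using x2 unfolding X2_def by simp
        ultimately have "x2 = v" using anc_antisym by blast
        then show False using x2 vC unfolding X2_def by auto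
      qed
      moreover have "anc V r par x2 u" using x2 unfolding X2_def by auto
      ultimately obtain i where "Suc i < length xs" "xs ! i = x2" "xs ! Suc i = par x2"
        using path_up[OF p assms(3)] by blast
      then show ?thesis using RS nuv vu by auto
    next
      case nvu: False
      show ?thesis
      proof (cases "X3 = {}")
        case True
        have Y3: "Y3 \<noteq> {}" "\<forall>x\<in>Y3. anc V r par x u" using uC nuv anc_refl[OF assms(1)] unfolding Y3_def by auto
        have y3: "y3 \<in> Y3" using highest_prop[OF Y3] unfolding y3_def by auto
        then obtain i where "Suc i < length xs" "xs ! i = y3" "xs ! Suc i = par y3"
          using path_up[OF p assms(3)] unfolding Y3_def by blast
        then show ?thesis using RS nuv nvu True by auto
      next
        case False
        have X3: "finite X3" "X3 \<noteq> {}" "\<forall>x\<in>X3. anc V r par x v" using finC False unfolding X3_def by auto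
        have x3: "x3 \<in> X3" using deepest_prop[OF X3] unfolding x3_def by auto
        have xv: "anc V r par x3 v" "x3 \<noteq> v" using x3 vC unfolding X3_def by auto
        have xu: "\<not> anc V r par x3 u" using x3 unfolding X3_def by auto
        define c where "c = (THE c. is_child V r par c x3 \<and> anc V r par c v)"
        have c: "is_child V r par c x3" "anc V r par c v" using child_toward[OF xv] unfolding c_def by auto
        have "\<not> anc V r par c u" using xu child_anc[OF c(1)] anc_trans by blast
        then obtain i where "Suc i < length xs" "xs ! i = par c" "xs ! Suc i = c"
          using path_down[OF p assms(3) c(2)] by blast
        moreover have "par c = x3" using c(1) unfolding is_child_def by simp
        ultimately show ?thesis using RS nuv nvu False unfolding c_def by auto
      qed
    qed
  qed
qed

end

theorem lemma12:
  fixes V :: "'a set" and r :: 'a and par c1 :: "'a \<Rightarrow> 'a" and k :: nat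
    and u v :: 'a and xs :: "'a list"
  assumes "is_rooted_tree V r par"
    and "leftmost_choice V r par c1"
    and "k \<ge> 4"
    and "u \<in> V" and "v \<in> V" and "u \<noteq> v"
    and "is_tree_path V r par xs u v"
  shows "\<forall>j1 j2. j1 \<le> j2 \<and> j2 < length (route_step V r par c1 k u v) \<longrightarrow>
           (\<exists>i1 i2. i1 \<le> i2 \<and> i2 < length xs \<and>
              route_step V r par c1 k u v ! j1 = xs ! i1 \<and>
              route_step V r par c1 k u v ! j2 = xs ! i2)"
proof -
  interpret rtree V r par using assms(1) by unfold_locales
  have m: "route_step V r par c1 k u v = [v] \<or> (\<exists>a b. route_step V r par c1 k u v = [a, b] \<and>
     (\<exists>i. Suc i < length xs \<and> xs ! i = a \<and> xs ! Suc i = b))"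
    using main[OF assms(4,5,6,7)] .
  then show ?thesis
  proof
    assume h: "route_step V r par c1 k u v = [v]"
    have "xs ! (length xs - 1) = v" "length xs > 0" using path_basic[OF assms(7)] by auto
    show ?thesis unfolding h
    proof (intro allI impI)
      fix j1 j2 :: nat assume "j1 \<le> j2 \<and> j2 < length [v]"
      then have "j1 = 0" "j2 = 0" by auto
      then show "\<exists>i1 i2. i1 \<le> i2 \<and> i2 < length xs \<and> [v] ! j1 = xs ! i1 \<and> [v] ! j2 = xs ! i2"
        using \<open>xs ! (length xs - 1) = v\<close> \<open>length xs > 0\<close>
        by (intro exI[of _ "length xs - 1"]) auto
    qed
  next
    assume "\<exists>a b. route_step V r par c1 k u v = [a, b] \<and> (\<exists>i. Suc i < length xs \<and> xs ! i = a \<and> xs ! Suc i = b)"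
    then obtain a b i where "route_step V r par c1 k u v = [a, b]" "Suc i < length xs" "xs ! i = a" "xs ! Suc i = b"
      by blast
    then show ?thesis using fin2 by simp
  qed
qed


end
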